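(* Let $A \in \mathbb{R}^{n\times d}$, $b\in\mathbb{R}^n$, and suppose $Ax=b$ admits a solution $x^*$. Let $w$ be a random variable in $\mathbb{R}^n$, $\mathcal{N}(w) = \mathrm{span}\lbrace z \in \mathbb{R}^d : \mathbb{P}[z'A'w=0]=1\rbrace$, $\mathcal{R}(w) = \mathcal{N}(w)^\perp$, and let $\mathcal{V}(w)$ be the subspace with $\mathcal{V}(w)\perp\mathcal{R}(w)$ and $\mathcal{V}(w)\oplus\mathcal{R}(w) = \mathrm{row}(A)$. Let $\lbrace w_\ell:\ell\geq 0\rbrace$ be random variables in $\mathbb{R}^n$ with $\mathbb{P}[A'w_\ell\in\mathcal{R}(w)]=1$ for all $\ell$, let $x_0\in\mathbb{R}^d$ be arbitrary and $x_{k+1} = x_k + A'w_kw_k'(b-Ax_k)/\|A'w_k\|_2^2$. Define stopping times $\tau_0=0$, $\tau_1 = \min\lbrace k\geq0 : \mathrm{span}\lbrace A'w_0,\ldots,A'w_k\rbrace = \mathcal{R}(w)\rbrace$, and for $\ell\geq 2$, $\tau_\ell = \min\lbrace k>\tau_{\ell-1} : \mathrm{span}\lbrace A'w_{\tau_{\ell-1}+1},\ldots,A'w_k\rbrace = \mathcal{R}(w)\rbrace$ if $\tau_{\ell-1}<\infty$, else $\tau_\ell=\infty$. For finite stopping times, let $\mathcal{F}_\ell$ be the set of matrices whose columns form a maximal linearly independent subset of $\lbrace A'w_{\tau_{\ell-1}+1}/\|A'w_{\tau_{\ell-1}+1}\|_2,\ldots,A'w_{\tau_\ell}/\|A'w_{\tau_\ell}\|_2\rbrace$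 and $\gamma_\ell = 1-\min_{F\in\mathcal{F}_\ell}\det(F'F)$. Then, on the events $\bigcap_{\ell=0}^\infty\lbrace\tau_\ell<\infty\rbrace$ and $\lbrace\lim_{\ell\to\infty}\prod_{j=1}^\ell\gamma_j = 0\rbrace$, $\lim_{k\to\infty}Ax_k = b$ if and only if $P_{\mathcal{V}(w)}x_0 = P_{\mathcal{V}(w)}x^*$.
   Context: $P_W$ is orthogonal projection onto $W$; $\mathrm{row}(A)$ is the row space of $A$; $A'$ is the transpose. The iteration presupposes $A'w_k\neq 0$. *)

theory Defs
  imports "HOL-Analysis.Analysis" "HOL-Probability.Probability"
begin

definition orth_proj :: "('a::real_inner) set \<Rightarrow> 'a \<Rightarrow> 'a" where
  "orth_proj W x = (THE y. y \<in> W \<and> (\<forall>v\<in>W. orthogonal (x - y) v))"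

definition row_space :: "real^'d^'n \<Rightarrow> (real^'d) set" where
  "row_space A = span (rows A)"

primrec iterate :: "real^'d^'n \<Rightarrow> real^'n \<Rightarrow> (nat \<Rightarrow> real^'n) \<Rightarrow> real^'d \<Rightarrow> nat \<Rightarrow> real^'d" where
  "iterate A b w x0 0 = x0"
| "iterate A b w x0 (Suc k) =
     (let x = iterate A b w x0 k
      in x + (1 / (norm (transpose A *v w k))^2) *\<^sub>R (transpose A *v ((w k \<bullet> (b - A *v x)) *\<^sub>R w k)))"

definition first_spanning :: "(nat \<Rightarrow> 'a::real_vector) \<Rightarrow> 'a set \<Rightarrow> nat \<Rightarrow> nat \<Rightarrow> enat" where
  "first_spanning u R s t =
     (if \<exists>k\<ge>t. span (u ` {s..k}) = R
      then enat (LEAST k. k \<ge> t \<and> span (u ` {s..k}) = R) else \<infinity>)"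

fun stop_time :: "(nat \<Rightarrow> 'a::real_vector) \<Rightarrow> 'a set \<Rightarrow> nat \<Rightarrow> enat" where
  "stop_time u R 0 = 0"
| "stop_time u R (Suc 0) = first_spanning u R 0 0"
| "stop_time u R (Suc (Suc l)) =
     (case stop_time u R (Suc l) of
        enat t \<Rightarrow> first_spanning u R (Suc t) (Suc t)
      | \<infinity> \<Rightarrow> \<infinity>)"

text \<open>det(F'F) for the matrix F whose columns are the list cs (Leibniz formula for the
  determinant of the Gram matrix (F'F)_{ij} = cs!i \<bullet> cs!j).\<close>
definition gram_det :: "('a::real_inner) list \<Rightarrow> real" where
  "gram_det cs = (\<Sum>p\<in>{p. p permutes {..<length cs}}.
      of_int (sign p) * (\<Prod>i<length cs. (cs ! i) \<bullet> (cs ! (p i))))"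

definition max_indep_cols :: "('a::real_vector) set \<Rightarrow> 'a list set" where
  "max_indep_cols S = {cs. distinct cs \<and> set cs \<subseteq> S \<and> independent (set cs) \<and>
       (\<forall>T. set cs \<subset> T \<and> T \<subseteq> S \<longrightarrow> dependent T)}"

definition block_vectors :: "(nat \<Rightarrow> 'a::real_normed_vector) \<Rightarrow> 'a set \<Rightarrow> nat \<Rightarrow> 'a set" where
  "block_vectors u R l =
     (let lo = (if l = 1 then 0 else the_enat (stop_time u R (l - 1)) + 1);
          hi = the_enat (stop_time u R l)
      in (\<lambda>j. (1 / norm (u j)) *\<^sub>R u j) ` {lo..hi})"

definition gamma :: "(nat \<Rightarrow> 'a::real_inner) \<Rightarrow> 'a set \<Rightarrow> nat \<Rightarrow> real" where
  "gamma u R l = 1 - Min (gram_det ` max_indep_cols (block_vectors u R l))"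

end

theory Submission
  imports Defs "Jordan_Normal_Form.Determinant"
begin

no_notation Matrix.scalar_prod (infix "\<bullet>" 70)
hide_const (open) Matrix.orthogonal

definition gmat :: "('a::real_inner) list \<Rightarrow> real Matrix.mat" where
  "gmat cs = Matrix.mat (length cs) (length cs) (\<lambda>(i,j). (cs ! i) \<bullet> (cs ! j))"

lemma gmat_carrier: "gmat cs \<in> carrier_mat (length cs) (length cs)"
  by (simp add: gmat_def)

lemma gram_det_det: "gram_det cs = Determinant.det (gmat cs)"
proof -
  have "Determinant.det (gmat cs) = (\<Sum>p\<in>{p. p permutes {0..<length cs}}.
      signof p * (\<Prod>i=0..<length cs. gmat cs $$ (i, p i)))"
    by (rule det_def'[OF gmat_carrier])
  also have "\<dots> = gram_det cs"
    unfolding gram_det_def lessThan_atLeast0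
  proof (rule sum.cong[OF refl])
    fix p assume "p \<in> {p. p permutes {0..<length cs}}"
    hence p: "p permutes {0..<length cs}" by simp
    have "(\<Prod>i=0..<length cs. gmat cs $$ (i, p i)) = (\<Prod>i=0..<length cs. cs ! i \<bullet> cs ! p i)"
      by (rule prod.cong[OF refl]) (use permutes_in_image[OF p] in \<open>auto simp: gmat_def\<close>)
    thus "signof p * (\<Prod>i=0..<length cs. gmat cs $$ (i, p i)) = of_int (sign p) * (\<Prod>i=0..<length cs. cs ! i \<bullet> cs ! p i)"
      by simp
  qed
  finally show ?thesis ..
qed

lemma gram_det_Nil: "gram_det [] = 1"
  by (simp add: gram_det_det gmat_def det_def)

lemma gram_det_add_step:
  assumes j: "j < length cs"
  shows "gram_det ((a + c *\<^sub>R (cs ! j)) # cs) = gram_det (a # cs)"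
proof -
  let ?G = "gmat (a # cs)"
  have G: "?G \<in> carrier_mat (Suc (length cs)) (Suc (length cs))" using gmat_carrier[of "a#cs"] by simp
  have eq: "gmat ((a + c *\<^sub>R (cs ! j)) # cs) = addcol c 0 (Suc j) (addrow c 0 (Suc j) ?G)"
    by (rule eq_matI) (auto simp: gmat_def nth_Cons' inner_add_left inner_add_right algebra_simps power2_eq_square j)
  have "Determinant.det (addcol c 0 (Suc j) (addrow c 0 (Suc j) ?G)) = Determinant.det ?G"
    using j G by (subst det_addcol[where n="Suc (length cs)"]) (auto intro!: det_addrow[where n="Suc (length cs)"])
  thus ?thesis using eq by (simp add: gram_det_det)
qed

lemma gram_det_add_span:
  assumes "p \<in> span (set cs)"
  shows "gram_det ((a + p) # cs) = gram_det (a # cs)"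
  using assms
proof (induction p arbitrary: a rule: span_induct_alt)
  case base then show ?case by simp
next
  case (step c x y)
  then obtain j where j: "j < length cs" "x = cs ! j" by (auto simp: in_set_conv_nth)
  have "gram_det ((a + (c *\<^sub>R x + y)) # cs) = gram_det (((a + c *\<^sub>R cs ! j) + y) # cs)"
    using j by (simp add: algebra_simps)
  also have "\<dots> = gram_det ((a + c *\<^sub>R cs ! j) # cs)" by (rule step.IH)
  also have "\<dots> = gram_det (a # cs)" by (rule gram_det_add_step[OF j(1)])
  finally show ?case .
qed

lemma gram_det_orth:
  assumes "\<forall>b\<in>set cs. r \<bullet> b = 0"
  shows "gram_det (r # cs) = (r \<bullet> r) * gram_det cs"
proof -
  let ?G = "gmat (r # cs)"
  have G: "?G \<in> carrier_mat (Suc (length cs)) (Suc (length cs))" using gmat_carrier[of "r#cs"] by simp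
  have "Determinant.det ?G = (\<Sum>j<Suc (length cs). ?G $$ (0,j) * cofactor ?G 0 j)"
    by (rule laplace_expansion_row[OF G]) simp
  also have "\<dots> = ?G $$ (0,0) * cofactor ?G 0 0"
    unfolding sum.lessThan_Suc_shift using assms by (auto simp: gmat_def intro!: sum.neutral)
  also have "cofactor ?G 0 0 = gram_det cs"
  proof -
    have "mat_delete ?G 0 0 = gmat cs"
      by (rule eq_matI) (auto simp: gmat_def mat_delete_def)
    thus ?thesis by (simp add: cofactor_def gram_det_det)
  qed
  finally show ?thesis by (simp add: gram_det_det gmat_def)
qed


definition prj :: "'a::real_inner \<Rightarrow> 'a \<Rightarrow> 'a" where
  "prj a x = x - (a \<bullet> x) *\<^sub>R a"

fun Qlist :: "'a::real_inner list \<Rightarrow> 'a \<Rightarrow> 'a" where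
  "Qlist [] x = x"
| "Qlist (a # as) x = Qlist as (prj a x)"

lemma max_indep_spans:
  assumes "cs \<in> max_indep_cols S" shows "S \<subseteq> span (set cs)"
proof
  fix s assume s: "s \<in> S"
  show "s \<in> span (set cs)"
  proof (rule ccontr)
    assume ns: "s \<notin> span (set cs)"
    hence sn: "s \<notin> set cs" using span_base by blast
    have ind: "independent (set cs)" "set cs \<subseteq> S" using assms by (auto simp: max_indep_cols_def)
    have "independent (insert s (set cs))" using ind ns by (simp add: independent_insert)
    moreover have "set cs \<subset> insert s (set cs)" "insert s (set cs) \<subseteq> S" using sn s ind by auto
    ultimately show False using assms unfolding max_indep_cols_def by blast
  qed
qed

lemma max_indep_intro:
  assumes "distinct cs" "independent (set cs)" "set cs \<subseteq> S" "S \<subseteq> span (set cs)"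
  shows "cs \<in> max_indep_cols S"
  unfolding max_indep_cols_def
proof (intro CollectI conjI allI impI assms)
  fix T assume T: "set cs \<subset> T \<and> T \<subseteq> S"
  then obtain t where t: "t \<in> T" "t \<notin> set cs" by blast
  have "t \<in> span (set cs)" using T t assms(4) by blast
  moreover have "span (set cs) \<subseteq> span (T - {t})" using T t by (intro span_mono) blast
  ultimately show "dependent T" using t unfolding dependent_def by blast
qed

lemma Qlist_subspace:
  assumes "subspace W" "set as \<subseteq> W" "y \<in> W" shows "Qlist as y \<in> W"
  using assms(2,3)
proof (induction as arbitrary: y)
  case Nil then show ?case by simp
next
  case (Cons a as)
  have "prj a y \<in> W" unfolding prj_def using Cons.prems assms(1)
    by (intro subspace_diff subspace_mul) auto
  thus ?case using Cons by simp
qed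

lemma Qlist_orth_add:
  assumes "\<forall>b\<in>set as. b \<bullet> z = 0" shows "Qlist as (y + z) = Qlist as y + z"
  using assms
proof (induction as arbitrary: y)
  case Nil then show ?case by simp
next
  case (Cons a as)
  have "prj a (y + z) = prj a y + z" using Cons.prems by (simp add: prj_def inner_add_right algebra_simps)
  thus ?case using Cons by simp
qed

lemma prj_inner:
  assumes "norm a = 1" shows "prj a x \<bullet> prj a x = x \<bullet> x - (a \<bullet> x)^2" "a \<bullet> prj a x = 0"
proof -
  have aa: "a \<bullet> a = 1" using assms by (simp add: norm_eq_1)
  show "prj a x \<bullet> prj a x = x \<bullet> x - (a \<bullet> x)^2"
    unfolding prj_def by (simp add: inner_diff_left inner_diff_right aa inner_commute power2_eq_square)
  show "a \<bullet> prj a x = 0" unfolding prj_def by (simp add: inner_diff_right aa)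
qed

lemma Qlist_norm:
  assumes "\<forall>a\<in>set as. norm a = 1" shows "Qlist as x \<bullet> Qlist as x \<le> x \<bullet> x"
  using assms
proof (induction as arbitrary: x)
  case Nil then show ?case by simp
next
  case (Cons a as)
  have "Qlist as (prj a x) \<bullet> Qlist as (prj a x) \<le> prj a x \<bullet> prj a x" using Cons by simp
  also have "\<dots> \<le> x \<bullet> x" using prj_inner(1)[of a x] Cons.prems by simp
  finally show ?case by simp
qed


lemma meany:
  fixes as :: "'a::euclidean_space list"
  assumes "\<forall>a\<in>set as. norm a = 1"
  shows "\<exists>cs \<in> max_indep_cols (set as). 0 \<le> gram_det cs \<and> gram_det cs \<le> 1 \<and>
           (\<forall>x\<in>span (set as). Qlist as x \<bullet> Qlist as x \<le> (1 - gram_det cs) * (x \<bullet> x))"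
  using assms
proof (induction as)
  case Nil
  have "[] \<in> max_indep_cols (set ([]::'a list))" by (rule max_indep_intro) (auto simp: independent_empty)
  thus ?case by (intro bexI[of _ "[]"]) (auto simp: gram_det_Nil)
next
  case (Cons a as)
  from Cons obtain cs' where cs': "cs' \<in> max_indep_cols (set as)" and g0: "0 \<le> gram_det cs'"
    and g1: "gram_det cs' \<le> 1"
    and bnd: "\<And>x. x \<in> span (set as) \<Longrightarrow> Qlist as x \<bullet> Qlist as x \<le> (1 - gram_det cs') * (x \<bullet> x)"
    by auto
  have na: "norm a = 1" using Cons.prems by simp
  have aa: "a \<bullet> a = 1" using na by (simp add: norm_eq_1)
  have units: "\<forall>b\<in>set as. norm b = 1" using Cons.prems by simp
  let ?T = "span (set as)"
  have cs'sub: "set cs' \<subseteq> set as" and cs'ind: "independent (set cs')" and cs'd: "distinct cs'"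
    using cs' by (auto simp: max_indep_cols_def)
  have spT: "span (set cs') = ?T"
  proof
    show "span (set cs') \<subseteq> ?T" using cs'sub by (rule span_mono)
    show "?T \<subseteq> span (set cs')" using max_indep_spans[OF cs'] by (simp add: span_minimal)
  qed
  show ?case
  proof (cases "a \<in> ?T")
    case True
    have sub: "set (a # as) \<subseteq> span (set cs')" using True max_indep_spans[OF cs'] spT by auto
    have "cs' \<in> max_indep_cols (set (a # as))"
      by (rule max_indep_intro) (use cs'sub cs'ind cs'd sub in auto)
    moreover have "\<forall>x\<in>span (set (a # as)). Qlist (a # as) x \<bullet> Qlist (a # as) x \<le> (1 - gram_det cs') * (x \<bullet> x)"
    proof
      fix x assume x: "x \<in> span (set (a # as))"
      have "span (set (a # as)) \<subseteq> ?T" using sub spT by (simp add: span_minimal)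
      hence xT: "x \<in> ?T" using x by blast
      have pT: "prj a x \<in> ?T" unfolding prj_def using xT True by (intro span_diff span_mul)
      have "Qlist (a # as) x \<bullet> Qlist (a # as) x \<le> (1 - gram_det cs') * (prj a x \<bullet> prj a x)"
        using bnd[OF pT] by simp
      also have "\<dots> \<le> (1 - gram_det cs') * (x \<bullet> x)"
        using g1 prj_inner(1)[OF na, of x] by (intro mult_left_mono) auto
      finally show "Qlist (a # as) x \<bullet> Qlist (a # as) x \<le> (1 - gram_det cs') * (x \<bullet> x)" .
    qed
    ultimately show ?thesis using g0 g1 by blast
  next
    case False
    obtain p r where p: "p \<in> ?T" and r: "\<And>w. w \<in> ?T \<Longrightarrow> orthogonal r w" and apr: "a = p + r"
      using orthogonal_subspace_decomp_exists[of "set as" a] by metis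
    have rT: "\<And>w. w \<in> ?T \<Longrightarrow> r \<bullet> w = 0" using r by (simp add: Linear_Algebra.orthogonal_def)
    define s2 where "s2 = r \<bullet> r"
    have pr: "p \<bullet> r = 0" using rT[OF p] by (simp add: inner_commute)
    have one: "p \<bullet> p + s2 = 1" using aa unfolding apr s2_def
      by (simp add: inner_add_left inner_add_right pr inner_commute)
    have s20: "0 \<le> s2" unfolding s2_def by simp
    have pp0: "0 \<le> p \<bullet> p" by simp
    have gd: "gram_det (a # cs') = s2 * gram_det cs'"
    proof -
      have "gram_det (a # cs') = gram_det ((r + p) # cs')" using apr by (simp add: add.commute)
      also have "\<dots> = gram_det (r # cs')" using p spT by (intro gram_det_add_span) simp
      also have "\<dots> = s2 * gram_det cs'" unfolding s2_def
        by (rule gram_det_orth) (use cs'sub rT span_base in blast)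
      finally show ?thesis .
    qed
    have anT: "a \<notin> span (set cs')" using False spT by simp
    have mi: "a # cs' \<in> max_indep_cols (set (a # as))"
    proof (rule max_indep_intro)
      show "distinct (a # cs')" using cs'd anT span_base by force
      show "independent (set (a # cs'))" using cs'ind anT by (simp add: independent_insert)
      show "set (a # cs') \<subseteq> set (a # as)" using cs'sub by auto
      show "set (a # as) \<subseteq> span (set (a # cs'))"
      proof -
        have "set as \<subseteq> span (set cs')" using max_indep_spans[OF cs'] .
        also have "\<dots> \<subseteq> span (set (a # cs'))" by (intro span_mono) auto
        finally show ?thesis by (auto intro: span_base)
      qed
    qed
    have g: "0 \<le> s2 * gram_det cs'" "s2 * gram_det cs' \<le> 1"
    proof -
      have s21: "s2 \<le> 1" using one pp0 by linarith
      show "0 \<le> s2 * gram_det cs'" using s20 g0 by simp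
      show "s2 * gram_det cs' \<le> 1" using mult_le_one[OF s21 g0 g1] .
    qed
    have B: "\<forall>x\<in>span (set (a # as)). Qlist (a # as) x \<bullet> Qlist (a # as) x \<le> (1 - s2 * gram_det cs') * (x \<bullet> x)"
    proof
      fix x assume x: "x \<in> span (set (a # as))"
      define y' where "y' = prj a x"
      have y'sp: "y' \<in> span (insert a (set as))" unfolding y'_def prj_def using x
        by (intro span_diff span_mul) (auto intro: span_base)
      have ay': "a \<bullet> y' = 0" unfolding y'_def by (rule prj_inner(2)[OF na])
      obtain y z where y: "y \<in> ?T" and z: "\<And>w. w \<in> ?T \<Longrightarrow> orthogonal z w" and yz: "y' = y + z"
        using orthogonal_subspace_decomp_exists[of "set as" y'] by metis
      have zT: "\<And>w. w \<in> ?T \<Longrightarrow> z \<bullet> w = 0" using z by (simp add: Linear_Algebra.orthogonal_def)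
      have "z \<in> span (insert a (set as))"
      proof -
        have "y \<in> span (insert a (set as))" using y span_mono[of "set as" "insert a (set as)"] by blast
        thus ?thesis using y'sp yz span_diff by (metis add_diff_cancel_left')
      qed
      then obtain c where c: "z - c *\<^sub>R a \<in> ?T" using span_breakdown_eq by blast
      have zcr: "z = c *\<^sub>R r"
      proof -
        have e: "z - c *\<^sub>R r = (z - c *\<^sub>R a) + c *\<^sub>R p" using apr by (simp add: algebra_simps)
        have inT: "z - c *\<^sub>R r \<in> ?T" unfolding e using c p by (intro span_add span_mul)
        have "(z - c *\<^sub>R r) \<bullet> (z - c *\<^sub>R r) = 0"
          using zT[OF inT] rT[OF inT] by (simp add: inner_diff_left)
        thus ?thesis by simp
      qed
      have ry: "r \<bullet> y = 0" using rT[OF y] .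
      have key: "p \<bullet> y + c * s2 = 0"
        using ay' unfolding apr yz zcr s2_def
        by (simp add: inner_add_left inner_add_right pr ry inner_commute)
      have y'y': "y' \<bullet> y' = y \<bullet> y + c^2 * s2"
        unfolding yz zcr s2_def using ry
        by (simp add: inner_add_left inner_add_right inner_commute power2_eq_square)
      have cs: "(p \<bullet> y)^2 \<le> (p \<bullet> p) * (y \<bullet> y)"
      proof -
        have "\<bar>p \<bullet> y\<bar> \<le> norm p * norm y" by (rule Cauchy_Schwarz_ineq2)
        hence "\<bar>p \<bullet> y\<bar>^2 \<le> (norm p * norm y)^2" by (intro power_mono) auto
        thus ?thesis by (simp add: power_mult_distrib power2_norm_eq_inner)
      qed
      have sy: "s2 * (y' \<bullet> y') \<le> y \<bullet> y"
      proof -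
        have cps: "c * s2 = - (p \<bullet> y)" using key by linarith
        have "s2 * (y' \<bullet> y') = s2 * (y \<bullet> y) + (c * s2)^2" unfolding y'y' by (simp add: algebra_simps power2_eq_square)
        also have "(c * s2)^2 = (p \<bullet> y)^2" unfolding cps by simp
        also have "s2 * (y \<bullet> y) + (p \<bullet> y)^2 \<le> s2 * (y \<bullet> y) + (p \<bullet> p) * (y \<bullet> y)" using cs by simp
        also have "\<dots> = (s2 + p \<bullet> p) * (y \<bullet> y)" by (simp add: algebra_simps)
        also have "\<dots> = y \<bullet> y" using one by simp
        finally show ?thesis .
      qed
      have Qy'eq: "Qlist as y' = Qlist as y + z"
        unfolding yz by (rule Qlist_orth_add) (use zT span_base in \<open>auto simp: inner_commute\<close>)
      have QyT: "Qlist as y \<in> ?T" using y by (intro Qlist_subspace) (auto intro: span_base)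
      have "Qlist (a # as) x \<bullet> Qlist (a # as) x = Qlist as y \<bullet> Qlist as y + z \<bullet> z"
        using zT[OF QyT] by (simp add: y'_def[symmetric] Qy'eq inner_add_left inner_add_right inner_commute)
      also have "\<dots> \<le> (1 - gram_det cs') * (y \<bullet> y) + z \<bullet> z" using bnd[OF y] by simp
      also have "z \<bullet> z = y' \<bullet> y' - y \<bullet> y" unfolding yz using zT[OF y]
        by (simp add: inner_add_left inner_add_right inner_commute)
      also have "(1 - gram_det cs') * (y \<bullet> y) + (y' \<bullet> y' - y \<bullet> y) = y' \<bullet> y' - gram_det cs' * (y \<bullet> y)"
        by (simp add: algebra_simps)
      also have "\<dots> \<le> y' \<bullet> y' - gram_det cs' * (s2 * (y' \<bullet> y'))"
        using sy g0 by (simp add: mult_left_mono)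
      also have "\<dots> = (1 - s2 * gram_det cs') * (y' \<bullet> y')" by (simp add: algebra_simps)
      also have "\<dots> \<le> (1 - s2 * gram_det cs') * (x \<bullet> x)"
        using g(2) prj_inner(1)[OF na, of x] unfolding y'_def by (intro mult_left_mono) auto
      finally show "Qlist (a # as) x \<bullet> Qlist (a # as) x \<le> (1 - s2 * gram_det cs') * (x \<bullet> x)" .
    qed
    show ?thesis using mi g B gd by (intro bexI[of _ "a # cs'"]) auto
  qed
qed


no_notation Matrix.vec_index (infixl "$" 100)
hide_const (open) Matrix.row Matrix.col Matrix.mat Matrix.vec Matrix.rows Matrix.cols

lemma Qlist_append: "Qlist (xs @ ys) x = Qlist ys (Qlist xs x)"
  by (induction xs arbitrary: x) auto

lemma orth_proj_char:
  fixes V :: "'a::euclidean_space set"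
  assumes "subspace V" "y \<in> V" "\<forall>v\<in>V. orthogonal (x - y) v"
  shows "orth_proj V x = y"
  unfolding orth_proj_def
proof (rule the_equality)
  show "y \<in> V \<and> (\<forall>v\<in>V. orthogonal (x - y) v)" using assms by auto
  fix y' assume y': "y' \<in> V \<and> (\<forall>v\<in>V. orthogonal (x - y') v)"
  have d: "y - y' \<in> V" using assms y' by (simp add: subspace_diff)
  have "(x - y') - (x - y) = y - y'" by simp
  hence "(y - y') \<bullet> (y - y') = 0"
    using y' assms d by (metis Linear_Algebra.orthogonal_def inner_diff_left diff_self)
  thus "y' = y" by simp
qed

lemma orth_proj_exists:
  fixes V :: "'a::euclidean_space set"
  assumes "subspace V"
  shows "orth_proj V x \<in> V \<and> (\<forall>v\<in>V. orthogonal (x - orth_proj V x) v)"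
proof -
  obtain y z where "y \<in> span V" "\<And>w. w \<in> span V \<Longrightarrow> orthogonal z w" "x = y + z"
    using orthogonal_subspace_decomp_exists[of V x] by metis
  moreover have "span V = V" using assms by (simp add: span_eq_iff)
  ultimately have y: "y \<in> V" "\<forall>v\<in>V. orthogonal (x - y) v" by auto
  thus ?thesis using orth_proj_char[OF assms y] by simp
qed

lemma orth_proj_eq_iff:
  fixes V :: "'a::euclidean_space set"
  assumes "subspace V"
  shows "orth_proj V x0 = orth_proj V xs \<longleftrightarrow> (\<forall>v\<in>V. (x0 - xs) \<bullet> v = 0)"
proof
  assume eq: "orth_proj V x0 = orth_proj V xs"
  show "\<forall>v\<in>V. (x0 - xs) \<bullet> v = 0"
  proof
    fix v assume v: "v \<in> V"
    have "(x0 - orth_proj V x0) \<bullet> v = 0" "(xs - orth_proj V xs) \<bullet> v = 0"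
      using orth_proj_exists[OF assms, of x0] orth_proj_exists[OF assms, of xs] v
      by (auto simp: Linear_Algebra.orthogonal_def)
    thus "(x0 - xs) \<bullet> v = 0" using eq by (simp add: inner_diff_left)
  qed
next
  assume h: "\<forall>v\<in>V. (x0 - xs) \<bullet> v = 0"
  show "orth_proj V x0 = orth_proj V xs"
  proof (rule orth_proj_char[OF assms])
    show "orth_proj V xs \<in> V" using orth_proj_exists[OF assms] by blast
    show "\<forall>v\<in>V. orthogonal (x0 - orth_proj V xs) v"
    proof
      fix v assume v: "v \<in> V"
      have "(xs - orth_proj V xs) \<bullet> v = 0"
        using orth_proj_exists[OF assms, of xs] v by (auto simp: Linear_Algebra.orthogonal_def)
      moreover have "(x0 - orth_proj V xs) \<bullet> v = (x0 - xs) \<bullet> v + (xs - orth_proj V xs) \<bullet> v"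
        by (simp add: inner_diff_left)
      ultimately show "orthogonal (x0 - orth_proj V xs) v"
        using h v by (simp add: Linear_Algebra.orthogonal_def inner_add_left)
    qed
  qed
qed

lemma mult_zero_iff_row_space:
  fixes A :: "real^'d^'n"
  shows "A *v q = 0 \<longleftrightarrow> (\<forall>z\<in>row_space A. q \<bullet> z = 0)"
proof
  assume h: "A *v q = 0"
  have "rows A \<subseteq> {z. q \<bullet> z = 0}"
  proof
    fix z assume "z \<in> rows A"
    then obtain i where z: "z = Finite_Cartesian_Product.row i A" by (auto simp: Finite_Cartesian_Product.rows_def)
    have "(A *v q) $ i = 0" using h by simp
    hence "(A $ i) \<bullet> q = 0" by (simp add: matrix_vector_mul_component)
    moreover have "Finite_Cartesian_Product.row i A = A $ i" by (simp add: Finite_Cartesian_Product.row_def Finite_Cartesian_Product.vec_eq_iff)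
    ultimately show "z \<in> {z. q \<bullet> z = 0}" using z by (simp add: inner_commute)
  qed
  moreover have "subspace {z. q \<bullet> z = 0}"
    by (auto simp: subspace_def inner_add_right)
  ultimately have "span (rows A) \<subseteq> {z. q \<bullet> z = 0}" by (rule span_minimal)
  thus "\<forall>z\<in>row_space A. q \<bullet> z = 0" by (auto simp: row_space_def)
next
  assume h: "\<forall>z\<in>row_space A. q \<bullet> z = 0"
  show "A *v q = 0"
  proof (rule iffD2[OF Finite_Cartesian_Product.vec_eq_iff], intro allI)
    fix i
    have "Finite_Cartesian_Product.row i A \<in> row_space A"
      unfolding row_space_def by (rule span_base) (auto simp: Finite_Cartesian_Product.rows_def)
    moreover have "Finite_Cartesian_Product.row i A = A $ i" by (simp add: Finite_Cartesian_Product.row_def Finite_Cartesian_Product.vec_eq_iff)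
    ultimately have "q \<bullet> (A $ i) = 0" using h by metis
    thus "(A *v q) $ i = 0 $ i" by (simp add: matrix_vector_mul_component inner_commute)
  qed
qed

lemma first_spanning_enat:
  assumes "first_spanning u R s t = enat k"
  shows "t \<le> k \<and> span (u ` {s..k}) = R"
proof -
  have ex: "\<exists>k\<ge>t. span (u ` {s..k}) = R"
    using assms unfolding first_spanning_def by (auto split: if_splits)
  hence k: "k = (LEAST k. k \<ge> t \<and> span (u ` {s..k}) = R)"
    using assms unfolding first_spanning_def by auto
  show ?thesis unfolding k using ex by (metis (mono_tags, lifting) LeastI)
qed

definition lo_idx :: "(nat \<Rightarrow> 'a::real_vector) \<Rightarrow> 'a set \<Rightarrow> nat \<Rightarrow> nat" where
  "lo_idx u R l = (if l = 0 then 0 else the_enat (stop_time u R l) + 1)"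

lemma stop_time_block:
  assumes fin: "\<forall>l. stop_time u R l \<noteq> \<infinity>"
  shows "lo_idx u R l \<le> the_enat (stop_time u R (Suc l)) \<and>
         span (u ` {lo_idx u R l .. the_enat (stop_time u R (Suc l))}) = R \<and>
         lo_idx u R (Suc l) = the_enat (stop_time u R (Suc l)) + 1"
proof (cases l)
  case 0
  obtain k where k: "stop_time u R (Suc 0) = enat k"
    using fin[rule_format, of "Suc 0"] by (cases "stop_time u R (Suc 0)") (simp_all del: stop_time.simps)
  hence "first_spanning u R 0 0 = enat k" by simp
  from first_spanning_enat[OF this] show ?thesis using k 0 by (simp add: lo_idx_def)
next
  case (Suc m)
  obtain t where t: "stop_time u R (Suc m) = enat t"
    using fin[rule_format, of "Suc m"] by (cases "stop_time u R (Suc m)") (simp_all del: stop_time.simps)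
  obtain k where k: "stop_time u R (Suc (Suc m)) = enat k"
    using fin[rule_format, of "Suc (Suc m)"] by (cases "stop_time u R (Suc (Suc m))") (simp_all del: stop_time.simps)
  hence "first_spanning u R (Suc t) (Suc t) = enat k" using t by simp
  from first_spanning_enat[OF this] show ?thesis using k t Suc by (simp add: lo_idx_def)
qed

lemma block_vectors_eq:
  "block_vectors u R (Suc l) = (\<lambda>j. (1 / norm (u j)) *\<^sub>R u j) ` {lo_idx u R l .. the_enat (stop_time u R (Suc l))}"
  by (simp add: block_vectors_def lo_idx_def Let_def)

lemma finite_max_indep_cols:
  assumes "finite S" shows "finite (max_indep_cols S)"
proof -
  have "max_indep_cols S \<subseteq> {cs. set cs \<subseteq> S \<and> length cs \<le> card S}"
  proof
    fix cs assume "cs \<in> max_indep_cols S"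
    hence cs: "distinct cs" "set cs \<subseteq> S" unfolding max_indep_cols_def by auto
    have "length cs = card (set cs)" using distinct_card[OF cs(1)] by simp
    also have "\<dots> \<le> card S" using card_mono[OF assms cs(2)] .
    finally show "cs \<in> {cs. set cs \<subseteq> S \<and> length cs \<le> card S}" using cs by simp
  qed
  moreover have "finite {cs. set cs \<subseteq> S \<and> length cs \<le> card S}"
    using finite_lists_length_le[OF assms] .
  ultimately show ?thesis by (rule finite_subset)
qed

lemma Qlist_upt:
  assumes "\<And>k. r (Suc k) = prj (uh k) (r k)"
  shows "r (m + n) = Qlist (map uh [m..<m+n]) (r m)"
proof (induction n)
  case 0 then show ?case by simp
next
  case (Suc n)
  have "r (m + Suc n) = prj (uh (m + n)) (r (m + n))" using assms by simp
  also have "\<dots> = Qlist (map uh [m..<m + Suc n]) (r m)"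
    using Suc by (simp add: Qlist_append)
  finally show ?case .
qed


lemma span_normalize:
  assumes "\<forall>k. u k \<noteq> 0"
  shows "span ((\<lambda>j. (1 / norm (u j)) *\<^sub>R u j) ` S) = span (u ` S)"
proof
  show "span ((\<lambda>j. (1 / norm (u j)) *\<^sub>R u j) ` S) \<subseteq> span (u ` S)"
    by (rule span_minimal) (auto intro: span_mul span_base subspace_span)
  have "u ` S \<subseteq> span ((\<lambda>j. (1 / norm (u j)) *\<^sub>R u j) ` S)"
  proof
    fix v assume "v \<in> u ` S"
    then obtain j where j: "j \<in> S" "v = u j" by auto
    have "norm (u j) *\<^sub>R ((1 / norm (u j)) *\<^sub>R u j) \<in> span ((\<lambda>j. (1 / norm (u j)) *\<^sub>R u j) ` S)"
      using j by (intro span_mul span_base) auto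
    thus "v \<in> span ((\<lambda>j. (1 / norm (u j)) *\<^sub>R u j) ` S)" using assms j by simp
  qed
  thus "span (u ` S) \<subseteq> span ((\<lambda>j. (1 / norm (u j)) *\<^sub>R u j) ` S)"
    by (rule span_minimal) (rule subspace_span)
qed

lemma det_main:
  fixes A :: "real^'d^'n" and b :: "real^'n" and xs x0 :: "real^'d"
    and ws :: "nat \<Rightarrow> real^'n" and u :: "nat \<Rightarrow> real^'d" and R V :: "(real^'d) set"
  assumes sol: "A *v xs = b"
    and Rsub: "subspace R" and Vsub: "subspace V"
    and VR: "\<forall>v\<in>V. \<forall>r\<in>R. orthogonal v r"
    and Vsum: "{v + r | v r. v \<in> V \<and> r \<in> R} = row_space A"
    and u_def: "u = (\<lambda>k. transpose A *v ws k)"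
    and uR: "\<forall>k. u k \<in> R" and unz: "\<forall>k. u k \<noteq> 0"
    and fin: "\<forall>l. stop_time u R l \<noteq> \<infinity>"
    and prod0: "(\<lambda>l. \<Prod>j=1..l. gamma u R j) \<longlonglongrightarrow> 0"
  shows "((\<lambda>k. A *v iterate A b ws x0 k) \<longlonglongrightarrow> b) \<longleftrightarrow> orth_proj V x0 = orth_proj V xs"
proof -
  define uh where "uh k = (1 / norm (u k)) *\<^sub>R u k" for k
  have uh1: "norm (uh k) = 1" for k using unz by (simp add: uh_def)
  have uhR: "uh k \<in> R" for k unfolding uh_def using uR Rsub by (simp add: subspace_mul)
  define e where "e k = iterate A b ws x0 k - xs" for k
  have estep: "e (Suc k) = prj (uh k) (e k)" for k
  proof -
    define x where "x = iterate A b ws x0 k"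
    have 1: "transpose A *v (c *\<^sub>R ws k) = c *\<^sub>R u k" for c
      unfolding u_def by (simp only: matrix_vector_mult_scaleR)
    have 2: "ws k \<bullet> (b - A *v x) = - (u k \<bullet> e k)"
    proof -
      have "b - A *v x = A *v (xs - x)" using sol by (simp add: matrix_vector_mult_diff_distrib)
      hence "ws k \<bullet> (b - A *v x) = (transpose A *v ws k) \<bullet> (xs - x)"
        by (simp add: dot_lmul_matrix)
      also have "\<dots> = - (u k \<bullet> e k)" unfolding u_def e_def x_def by (simp add: inner_diff_right)
      finally show ?thesis .
    qed
    have "e (Suc k) = e k + (1 / (norm (u k))^2) *\<^sub>R ((- (u k \<bullet> e k)) *\<^sub>R u k)"
    proof -
      have it: "iterate A b ws x0 (Suc k) = x + (1 / (norm (u k))^2) *\<^sub>R (transpose A *v ((ws k \<bullet> (b - A *v x)) *\<^sub>R ws k))"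
        unfolding u_def x_def by (simp only: iterate.simps Let_def)
      show ?thesis unfolding e_def it 1 2 by (simp add: x_def e_def algebra_simps)
    qed
    also have "\<dots> = prj (uh k) (e k)"
      unfolding prj_def uh_def by (simp add: power2_eq_square algebra_simps)
    finally show ?thesis .
  qed
  obtain r0 q where r0: "r0 \<in> span R" and q: "\<And>w. w \<in> span R \<Longrightarrow> orthogonal q w" and e0: "e 0 = r0 + q"
    using orthogonal_subspace_decomp_exists[of R "e 0"] by metis
  have spR: "span R = R" using Rsub by (simp add: span_eq_iff)
  have qR: "\<And>w. w \<in> R \<Longrightarrow> q \<bullet> w = 0" using q spR by (simp add: Linear_Algebra.orthogonal_def)
  define rr where "rr k = e k - q" for k
  have rrstep: "rr (Suc k) = prj (uh k) (rr k)" for k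
  proof -
    have "uh k \<bullet> q = 0" using qR[OF uhR] by (simp add: inner_commute)
    thus ?thesis unfolding rr_def estep prj_def by (simp add: inner_diff_right algebra_simps)
  qed
  have rrR: "rr k \<in> R" for k
  proof (induction k)
    case 0 then show ?case using r0 spR e0 by (simp add: rr_def)
  next
    case (Suc k) then show ?case unfolding rrstep prj_def using uhR Rsub
      by (simp add: subspace_diff subspace_mul)
  qed
  define f where "f k = rr k \<bullet> rr k" for k
  have f0: "0 \<le> f k" for k by (simp add: f_def)
  have fdec: "decseq f"
  proof (rule decseq_SucI)
    fix k show "f (Suc k) \<le> f k" unfolding f_def rrstep using prj_inner(1)[OF uh1, of k "rr k"] by simp
  qed
  have block: "f (lo_idx u R (Suc l)) \<le> gamma u R (Suc l) * f (lo_idx u R l) \<and> 0 \<le> gamma u R (Suc l)" for l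
  proof -
    define lo where "lo = lo_idx u R l"
    define hi where "hi = the_enat (stop_time u R (Suc l))"
    have blk: "lo \<le> hi" "span (u ` {lo..hi}) = R" "lo_idx u R (Suc l) = hi + 1"
      using stop_time_block[OF fin, of l] unfolding lo_def hi_def by auto
    define L where "L = map uh [lo..<hi+1]"
    have setL0: "set L = (\<lambda>j. (1 / norm (u j)) *\<^sub>R u j) ` {lo..hi}"
      unfolding L_def uh_def set_map set_upt Suc_eq_plus1[symmetric] atLeastLessThanSuc_atLeastAtMost ..
    have setL: "set L = block_vectors u R (Suc l)"
      unfolding setL0 block_vectors_eq lo_def[symmetric] hi_def[symmetric] ..
    have spL: "span (set L) = R"
    proof -
      show ?thesis unfolding setL0 using span_normalize[OF unz, of "{lo..hi}"] blk(2) by simp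
    qed
    have rrhi: "rr (hi + 1) = Qlist L (rr lo)"
      using Qlist_upt[of rr uh lo "hi + 1 - lo", OF rrstep] blk(1) unfolding L_def by simp
    have unitL: "\<forall>a\<in>set L. norm a = 1" unfolding L_def using uh1 by auto
    obtain cs where cs: "cs \<in> max_indep_cols (set L)" "0 \<le> gram_det cs" "gram_det cs \<le> 1"
      and bnd: "\<forall>x\<in>span (set L). Qlist L x \<bullet> Qlist L x \<le> (1 - gram_det cs) * (x \<bullet> x)"
      using meany[OF unitL] by blast
    have "Min (gram_det ` max_indep_cols (set L)) \<le> gram_det cs"
      using cs(1) finite_max_indep_cols[of "set L"] by (intro Min_le) auto
    hence gam: "1 - gram_det cs \<le> gamma u R (Suc l)" unfolding gamma_def setL[symmetric] by simp
    have "f (hi + 1) \<le> (1 - gram_det cs) * f lo"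
      unfolding f_def rrhi using bnd rrR[of lo] spL by simp
    also have "\<dots> \<le> gamma u R (Suc l) * f lo" using gam f0[of lo] by (intro mult_right_mono) auto
    finally show ?thesis using gam cs(3) blk(3) unfolding lo_def by simp
  qed
  have prodbnd: "f (lo_idx u R l) \<le> (\<Prod>j=1..l. gamma u R j) * f 0" for l
  proof (induction l)
    case 0 then show ?case by (simp add: lo_idx_def)
  next
    case (Suc l)
    have "f (lo_idx u R (Suc l)) \<le> gamma u R (Suc l) * f (lo_idx u R l)" using block by blast
    also have "\<dots> \<le> gamma u R (Suc l) * ((\<Prod>j=1..l. gamma u R j) * f 0)"
      using Suc block[of l] by (intro mult_left_mono) auto
    finally show ?case by (simp add: algebra_simps)
  qed
  have flim: "f \<longlonglongrightarrow> 0"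
  proof (rule LIMSEQ_I)
    fix r :: real assume r: "0 < r"
    have "(\<lambda>l. (\<Prod>j=1..l. gamma u R j) * f 0) \<longlonglongrightarrow> 0" by (rule tendsto_mult_left_zero[OF prod0])
    from LIMSEQ_D[OF this r] obtain no where no: "\<forall>n\<ge>no. norm ((\<Prod>j=1..n. gamma u R j) * f 0 - 0) < r" by blast
    show "\<exists>no. \<forall>n\<ge>no. norm (f n - 0) < r"
    proof (intro exI allI impI)
      fix n assume n: "lo_idx u R no \<le> n"
      have "f n \<le> f (lo_idx u R no)" using fdec n by (simp add: decseq_def)
      also have "\<dots> \<le> (\<Prod>j=1..no. gamma u R j) * f 0" by (rule prodbnd)
      also have "\<dots> < r" using no by auto
      finally show "norm (f n - 0) < r" using f0[of n] by simp
    qed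
  qed
  have rrlim: "rr \<longlonglongrightarrow> 0"
  proof -
    have "(\<lambda>k. sqrt (f k)) \<longlonglongrightarrow> sqrt 0" by (intro tendsto_intros flim)
    moreover have "sqrt (f k) = norm (rr k)" for k by (simp add: f_def norm_eq_sqrt_inner)
    ultimately have "(\<lambda>k. norm (rr k)) \<longlonglongrightarrow> 0" by simp
    thus ?thesis by (simp add: tendsto_norm_zero_iff)
  qed
  have Aeq: "A *v iterate A b ws x0 k = (b + A *v q) + A *v rr k" for k
  proof -
    have "iterate A b ws x0 k = xs + q + rr k" unfolding rr_def e_def by simp
    thus ?thesis using sol by (simp add: matrix_vector_right_distrib algebra_simps)
  qed
  have Arr: "(\<lambda>k. A *v rr k) \<longlonglongrightarrow> 0"
    using bounded_linear.tendsto_zero[OF matrix_vector_mul_bounded_linear rrlim] .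
  have lim: "(\<lambda>k. A *v iterate A b ws x0 k) \<longlonglongrightarrow> b + A *v q"
    unfolding Aeq using tendsto_add[OF tendsto_const Arr] by simp
  have step1: "((\<lambda>k. A *v iterate A b ws x0 k) \<longlonglongrightarrow> b) \<longleftrightarrow> A *v q = 0"
  proof
    assume "(\<lambda>k. A *v iterate A b ws x0 k) \<longlonglongrightarrow> b"
    from LIMSEQ_unique[OF this lim] show "A *v q = 0" by simp
  next
    assume "A *v q = 0" thus "(\<lambda>k. A *v iterate A b ws x0 k) \<longlonglongrightarrow> b" using lim by simp
  qed
  have VsubRow: "V \<subseteq> row_space A"
  proof
    fix v assume "v \<in> V"
    moreover have "0 \<in> R" using Rsub by (simp add: subspace_0)
    ultimately have "v + 0 \<in> {v + r | v r. v \<in> V \<and> r \<in> R}" by blast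
    thus "v \<in> row_space A" using Vsum by simp
  qed
  have step2: "A *v q = 0 \<longleftrightarrow> (\<forall>v\<in>V. q \<bullet> v = 0)"
    unfolding mult_zero_iff_row_space
  proof
    assume "\<forall>z\<in>row_space A. q \<bullet> z = 0" thus "\<forall>v\<in>V. q \<bullet> v = 0" using VsubRow by blast
  next
    assume h: "\<forall>v\<in>V. q \<bullet> v = 0"
    show "\<forall>z\<in>row_space A. q \<bullet> z = 0"
    proof
      fix z assume "z \<in> row_space A"
      then obtain v r where "z = v + r" "v \<in> V" "r \<in> R" using Vsum by blast
      thus "q \<bullet> z = 0" using h qR by (simp add: inner_add_right)
    qed
  qed
  have step3: "(\<forall>v\<in>V. q \<bullet> v = 0) \<longleftrightarrow> (\<forall>v\<in>V. (x0 - xs) \<bullet> v = 0)"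
  proof -
    have "(x0 - xs) \<bullet> v = q \<bullet> v" if "v \<in> V" for v
    proof -
      have "v \<bullet> r0 = 0" using VR that r0 spR by (simp add: Linear_Algebra.orthogonal_def)
      hence "r0 \<bullet> v = 0" by (simp add: inner_commute)
      moreover have "x0 - xs = r0 + q" using e0 by (simp add: e_def)
      ultimately show ?thesis by (simp add: inner_add_left)
    qed
    thus ?thesis by auto
  qed
  show ?thesis using step1 step2 step3 orth_proj_eq_iff[OF Vsub] by simp
qed

theorem mainTheorem11:
  fixes M :: "'a measure"
    and A :: "real^'d^'n" and b :: "real^'n" and xs :: "real^'d" and x0 :: "real^'d"
    and w :: "'a \<Rightarrow> real^'n" and ws :: "nat \<Rightarrow> 'a \<Rightarrow> real^'n"
    and N R V :: "(real^'d) set"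
  assumes "prob_space M"
    and sol: "A *v xs = b"
    and w_meas: "w \<in> borel_measurable M"
    and ws_meas: "\<And>l. ws l \<in> borel_measurable M"
    and N_def: "N = span {z. measure M {\<omega> \<in> space M. z \<bullet> (transpose A *v w \<omega>) = 0} = 1}"
    and R_def: "R = orthogonal_comp N"
    and V_sub: "subspace V"
    and V_orth: "\<forall>v\<in>V. \<forall>r\<in>R. orthogonal v r"
    and V_sum: "V \<inter> R = {0}" "{v + r | v r. v \<in> V \<and> r \<in> R} = row_space A"
    and ws_R: "\<And>l. measure M {\<omega> \<in> space M. transpose A *v ws l \<omega> \<in> R} = 1"
    and ws_nz: "\<And>l. measure M {\<omega> \<in> space M. transpose A *v ws l \<omega> \<noteq> 0} = 1"
  shows "AE \<omega> in M.
           ((\<forall>l. stop_time (\<lambda>k. transpose A *v ws k \<omega>) R l \<noteq> \<infinity>) \<and>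
            (\<lambda>l. \<Prod>j=1..l. gamma (\<lambda>k. transpose A *v ws k \<omega>) R j) \<longlonglongrightarrow> 0)
           \<longrightarrow> (((\<lambda>k. A *v iterate A b (\<lambda>k. ws k \<omega>) x0 k) \<longlonglongrightarrow> b)
                \<longleftrightarrow> orth_proj V x0 = orth_proj V xs)"
proof -
  interpret P: prob_space M by fact
  have Rsub: "subspace R" unfolding R_def by (rule subspace_orthogonal_comp)
  have ae: "AE \<omega> in M. \<forall>l. transpose A *v ws l \<omega> \<in> R \<and> transpose A *v ws l \<omega> \<noteq> 0"
    unfolding AE_all_countable
  proof
    fix l
    have 1: "AE \<omega> in M. \<omega> \<in> {\<omega> \<in> space M. transpose A *v ws l \<omega> \<in> R}"
      by (rule P.AE_prob_1) (rule ws_R)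
    have 2: "AE \<omega> in M. \<omega> \<in> {\<omega> \<in> space M. transpose A *v ws l \<omega> \<noteq> 0}"
      by (rule P.AE_prob_1) (rule ws_nz)
    show "AE \<omega> in M. transpose A *v ws l \<omega> \<in> R \<and> transpose A *v ws l \<omega> \<noteq> 0"
      using 1 2 by eventually_elim auto
  qed
  show ?thesis
    using ae
  proof (rule eventually_mono)
    fix \<omega> assume h: "\<forall>l. transpose A *v ws l \<omega> \<in> R \<and> transpose A *v ws l \<omega> \<noteq> 0"
    show "((\<forall>l. stop_time (\<lambda>k. transpose A *v ws k \<omega>) R l \<noteq> \<infinity>) \<and>
            (\<lambda>l. \<Prod>j=1..l. gamma (\<lambda>k. transpose A *v ws k \<omega>) R j) \<longlonglongrightarrow> 0)
           \<longrightarrow> (((\<lambda>k. A *v iterate A b (\<lambda>k. ws k \<omega>) x0 k) \<longlonglongrightarrow> b)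
                \<longleftrightarrow> orth_proj V x0 = orth_proj V xs)"
    proof
      assume c: "(\<forall>l. stop_time (\<lambda>k. transpose A *v ws k \<omega>) R l \<noteq> \<infinity>) \<and>
            (\<lambda>l. \<Prod>j=1..l. gamma (\<lambda>k. transpose A *v ws k \<omega>) R j) \<longlonglongrightarrow> 0"
      show "((\<lambda>k. A *v iterate A b (\<lambda>k. ws k \<omega>) x0 k) \<longlonglongrightarrow> b) \<longleftrightarrow> orth_proj V x0 = orth_proj V xs"
        by (rule det_main[OF sol Rsub V_sub V_orth V_sum(2) refl]) (use h c in auto)
    qed
  qed
qed

end
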